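(* For every ensemble $\mathcal{E}=\{\eta_{i},\rho_{i}\}_{i\in\mathbb{N}_{n}}$, $p_{\sf G}(\mathcal{E})=q_{\sf G}(\mathcal{E})$.
   Context: $\mathbb{N}_{n}=\{1,\ldots,n\}$. $\mathcal{H}$ is a finite-dimensional complex Hilbert space, $\mathbb{H}$ the Hermitian operators on it, $\mathbb{H}_{+}$ the positive-semidefinite ones, $\mathbbm{1}$ the identity. An ensemble $\mathcal{E}=\{\eta_{i},\rho_{i}\}_{i\in\mathbb{N}_{n}}$: density operators $\rho_i$ with probabilities $\eta_i>0$, $\sum_i\eta_i=1$; $\rho_0=\sum_i\eta_i\rho_i$. A measurement is $\{M_{?}\}\cup\{M_{i}\}_{i\in\mathbb{N}_{n}}\subseteq\mathbb{H}_+$ with $M_?+\sum_iM_i=\mathbbm{1}$. $\mathcal{C}_{x}(\mathcal{E})$ is the maximum of $\eta_{x}\Tr(\rho_{x}M_{x})/\Tr(\rho_{0}M_{x})$ over measurements with $\Tr(\rho_{0}M_{x})>0$. $\mathbb{M}_{i}(\mathcal{E})=\{E\in\mathbb{H}_{+}\mid\Tr[(\mathcal{C}_{i}(\mathcal{E})\rho_{0}-\eta_{i}\rho_{i})E]=0\}$ and $\mathbb{M}_{i}^{*}(\mathcal{E})=\{E\in\mathbb{H}\mid\Tr(EF)\ge0\ \forall F\in\mathbb{M}_{i}(\mathcal{E})\}$. $\mathbb{M}(\mathcal{E})$ is the set of measurements with $M_i\in\mathbb{M}_i(\mathcal{E})$ for all $i$. $p_{\sf G}(\mathcal{E})=\max_{\mathcal{M}\in\mathbb{M}(\mathcal{E})}\sum_{i}\eta_{i}\Tr(\rho_{i}M_{i})$.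 $\mathbb{H}(\mathcal{E})=\{H\in\mathbb{H}_{+}\mid H-\eta_{i}\rho_{i}\in\mathbb{M}_{i}^{*}(\mathcal{E})\ \forall i\}$ and $q_{\sf G}(\mathcal{E})=\min_{H\in\mathbb{H}(\mathcal{E})}\Tr H$. *)

theory Defs
  imports "HOL-Analysis.Analysis"
begin

type_synonym 'd op = "complex^'d^'d"

definition adj :: "'d::finite op \<Rightarrow> 'd op" where
  "adj A = (\<chi> i j. cnj (A $ j $ i))"

definition hermitian :: "'d::finite op \<Rightarrow> bool" where
  "hermitian A \<longleftrightarrow> adj A = A"

definition psd :: "'d::finite op \<Rightarrow> bool" where
  "psd A \<longleftrightarrow> hermitian A \<and>
     (\<forall>v::complex^'d. let q = (\<Sum>i\<in>UNIV. cnj (v $ i) * (A *v v) $ i) in Im q = 0 \<and> Re q \<ge> 0)"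

definition tr :: "'d::finite op \<Rightarrow> complex" where
  "tr A = (\<Sum>i\<in>UNIV. A $ i $ i)"

definition density :: "'d::finite op \<Rightarrow> bool" where
  "density \<rho> \<longleftrightarrow> psd \<rho> \<and> tr \<rho> = 1"

definition ensemble :: "nat \<Rightarrow> (nat \<Rightarrow> real) \<Rightarrow> (nat \<Rightarrow> 'd::finite op) \<Rightarrow> bool" where
  "ensemble n \<eta> \<rho> \<longleftrightarrow> n \<ge> 1 \<and> (\<forall>i\<in>{1..n}. \<eta> i > 0 \<and> density (\<rho> i)) \<and> (\<Sum>i=1..n. \<eta> i) = 1"

definition rho0 :: "nat \<Rightarrow> (nat \<Rightarrow> real) \<Rightarrow> (nat \<Rightarrow> 'd::finite op) \<Rightarrow> 'd op" where
  "rho0 n \<eta> \<rho> = (\<Sum>i=1..n. \<eta> i *\<^sub>R \<rho> i)"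

text \<open>A measurement {M_?} \<union> {M_i}: Mq is M_?, M i is M_i for i in {1..n}.\<close>
definition measurement :: "nat \<Rightarrow> 'd::finite op \<Rightarrow> (nat \<Rightarrow> 'd op) \<Rightarrow> bool" where
  "measurement n Mq M \<longleftrightarrow> psd Mq \<and> (\<forall>i\<in>{1..n}. psd (M i)) \<and> Mq + (\<Sum>i=1..n. M i) = mat 1"

definition C :: "nat \<Rightarrow> (nat \<Rightarrow> real) \<Rightarrow> (nat \<Rightarrow> 'd::finite op) \<Rightarrow> nat \<Rightarrow> real" where
  "C n \<eta> \<rho> x = Sup {\<eta> x * Re (tr (\<rho> x ** M x)) / Re (tr (rho0 n \<eta> \<rho> ** M x)) | Mq M.
      measurement n Mq M \<and> Re (tr (rho0 n \<eta> \<rho> ** M x)) > 0}"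

definition Mset :: "nat \<Rightarrow> (nat \<Rightarrow> real) \<Rightarrow> (nat \<Rightarrow> 'd::finite op) \<Rightarrow> nat \<Rightarrow> 'd op set" where
  "Mset n \<eta> \<rho> i = {E. psd E \<and>
     tr ((C n \<eta> \<rho> i *\<^sub>R rho0 n \<eta> \<rho> - \<eta> i *\<^sub>R \<rho> i) ** E) = 0}"

definition Mdual :: "nat \<Rightarrow> (nat \<Rightarrow> real) \<Rightarrow> (nat \<Rightarrow> 'd::finite op) \<Rightarrow> nat \<Rightarrow> 'd op set" where
  "Mdual n \<eta> \<rho> i = {E. hermitian E \<and> (\<forall>F\<in>Mset n \<eta> \<rho> i. Re (tr (E ** F)) \<ge> 0)}"

definition pG :: "nat \<Rightarrow> (nat \<Rightarrow> real) \<Rightarrow> (nat \<Rightarrow> 'd::finite op) \<Rightarrow> real" where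
  "pG n \<eta> \<rho> = Sup {(\<Sum>i=1..n. \<eta> i * Re (tr (\<rho> i ** M i))) | Mq M.
      measurement n Mq M \<and> (\<forall>i\<in>{1..n}. M i \<in> Mset n \<eta> \<rho> i)}"

definition qG :: "nat \<Rightarrow> (nat \<Rightarrow> real) \<Rightarrow> (nat \<Rightarrow> 'd::finite op) \<Rightarrow> real" where
  "qG n \<eta> \<rho> = Inf {Re (tr H) | H. psd H \<and>
      (\<forall>i\<in>{1..n}. H - \<eta> i *\<^sub>R \<rho> i \<in> Mdual n \<eta> \<rho> i)}"

end

theory Submission
  imports Defs
begin

definition qf :: "'d::finite op \<Rightarrow> complex^'d \<Rightarrow> complex" where
  "qf A v = (\<Sum>i\<in>UNIV. cnj (v $ i) * (A *v v) $ i)"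

lemma qf_expand: "qf A v = (\<Sum>i\<in>UNIV. \<Sum>j\<in>UNIV. cnj (v$i) * A$i$j * v$j)"
  by (simp add: qf_def matrix_vector_mult_def sum_distrib_left mult.assoc)

lemma psd_iff: "psd A \<longleftrightarrow> hermitian A \<and> (\<forall>v. Im (qf A v) = 0 \<and> 0 \<le> Re (qf A v))"
  by (simp add: psd_def qf_def Let_def)

lemma hermitian_iff: "hermitian A \<longleftrightarrow> (\<forall>i j. A$j$i = cnj (A$i$j))"
proof -
  have "hermitian A \<longleftrightarrow> (\<forall>i j. cnj (A$j$i) = A$i$j)"
    by (simp add: hermitian_def adj_def vec_eq_iff)
  also have "\<dots> \<longleftrightarrow> (\<forall>i j. A$j$i = cnj (A$i$j))"
    by (metis complex_cnj_cnj)
  finally show ?thesis .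
qed

lemma tr_mult: "tr (A ** B) = (\<Sum>i\<in>UNIV. \<Sum>j\<in>UNIV. A$i$j * B$j$i)"
  by (simp add: tr_def matrix_matrix_mult_def)

lemma tr_add: "tr (A + B) = tr A + tr B" by (simp add: tr_def sum.distrib)
lemma tr_diff: "tr (A - B) = tr A - tr B" by (simp add: tr_def sum_subtractf)

definition ip :: "'d::finite op \<Rightarrow> 'd op \<Rightarrow> real" where
  "ip A B = Re (tr (A ** B))"

lemma ip_expand: "ip A B = (\<Sum>i\<in>UNIV. \<Sum>j\<in>UNIV. Re (A$i$j * B$j$i))"
  by (simp add: ip_def tr_mult)

lemma ip_add_right: "ip A (B + D) = ip A B + ip A D"
  by (simp add: ip_expand ring_distribs sum.distrib)
lemma ip_add_left: "ip (A + B) D = ip A D + ip B D"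
  by (simp add: ip_expand ring_distribs sum.distrib)
lemma ip_diff_left: "ip (A - B) D = ip A D - ip B D"
  by (simp add: ip_expand ring_distribs sum_subtractf)
lemma ip_diff_right: "ip A (B - D) = ip A B - ip A D"
  by (simp add: ip_expand ring_distribs sum_subtractf)
lemma ip_scale_right: "ip A (c *\<^sub>R B) = c * ip A B"
  by (simp add: ip_expand sum_distrib_left)
lemma ip_scale_left: "ip (c *\<^sub>R A) B = c * ip A B"
  by (simp add: ip_expand sum_distrib_left)
lemma ip_zero_right[simp]: "ip A 0 = 0" by (simp add: ip_expand)
lemma ip_zero_left[simp]: "ip 0 A = 0" by (simp add: ip_expand)
lemma ip_sum_right: "ip A (\<Sum>i\<in>S. B i) = (\<Sum>i\<in>S. ip A (B i))"
  by (induction S rule: infinite_finite_induct) (auto simp: ip_add_right)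
lemma ip_sum_left: "ip (\<Sum>i\<in>S. B i) A = (\<Sum>i\<in>S. ip (B i) A)"
  by (induction S rule: infinite_finite_induct) (auto simp: ip_add_left)
lemma ip_mat1: "ip A (mat 1) = Re (tr A)"
  by (simp add: ip_def tr_def matrix_mul_rid)

lemma tr_mat1_mult: "Re (tr (A ** B)) = ip A B" by (simp add: ip_def)

lemma inner_herm: assumes "hermitian A" shows "inner A B = ip A B"
proof -
  have h: "\<And>i j. cnj (A$i$j) = A$j$i" using assms hermitian_iff by (metis complex_cnj_cnj)
  have "inner A B = (\<Sum>i\<in>UNIV. \<Sum>j\<in>UNIV. Re (cnj (A$i$j) * B$i$j))"
    by (simp add: inner_vec_def inner_complex_def)
  also have "\<dots> = (\<Sum>i\<in>UNIV. \<Sum>j\<in>UNIV. Re (A$j$i * B$i$j))" by (simp only: h)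
  also have "\<dots> = ip A B" unfolding ip_expand by (rule sum.swap)
  finally show ?thesis .
qed

lemma if0_mult: "(if P then x else 0) * (f::complex) = (if P then x * f else 0)" by simp
lemma mult_if0: "(f::complex) * (if P then x else 0) = (if P then f * x else 0)" by simp

lemma sum_two: fixes x y :: complex and f :: "'d::finite \<Rightarrow> complex" assumes "j \<noteq> k"
  shows "(\<Sum>l\<in>UNIV. (if l = k then x else if l = j then y else 0) * f l) = x * f k + y * f j"
  "(\<Sum>l\<in>UNIV. f l * (if l = k then x else if l = j then y else 0)) = f k * x + f j * y"
proof -
  have e: "\<And>l. (if l = k then x else if l = j then y else 0) = (if l = k then x else 0) + (if l = j then y else (0::complex))"
    using assms by auto
  show "(\<Sum>l\<in>UNIV. (if l = k then x else if l = j then y else 0) * f l) = x * f k + y * f j"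
    unfolding e by (simp add: ring_distribs sum.distrib if0_mult sum.delta sum.delta')
  show "(\<Sum>l\<in>UNIV. f l * (if l = k then x else if l = j then y else 0)) = f k * x + f j * y"
    unfolding e by (simp add: ring_distribs sum.distrib mult_if0)
qed

lemma qf_two: fixes A :: "'d::finite op" assumes "j \<noteq> k"
  shows "qf A (\<chi> l. if l = k then x else if l = j then y else 0) =
    cnj x * A$k$k * x + cnj x * A$k$j * y + cnj y * A$j$k * x + cnj y * A$j$j * y"
proof -
  have c: "\<And>i. cnj (if i = k then x else if i = j then y else 0) = (if i = k then cnj x else if i = j then cnj y else 0)"
    by auto
  show ?thesis
    unfolding qf_expand vec_lambda_beta c
    by (simp add: mult.assoc sum_distrib_left[symmetric] sum_two[OF assms] ring_distribs sum.distrib)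
qed

lemma qf_axis: "qf A (axis k 1) = A$k$k"
  proof -
  have c: "\<And>i. cnj (if i = k then 1 else 0) = (if i = k then 1 else (0::complex))" by auto
  show ?thesis by (simp add: qf_expand axis_def if0_mult mult_if0 c sum.delta sum.delta')
qed

lemma scale_nonneg: assumes "\<And>t. t > 0 \<Longrightarrow> 0 \<le> c + t * (b::real)" shows "0 \<le> b"
proof (rule ccontr)
  assume "\<not> 0 \<le> b"
  then have b: "b < 0" by simp
  define t where "t = (\<bar>c\<bar> + 1) / (- b)"
  have t: "t > 0" unfolding t_def using b by (intro divide_pos_pos) auto
  have "t * b = - (\<bar>c\<bar> + 1)" using b by (simp add: t_def field_simps)
  then have "c + t * b < 0" by linarith
  with assms[OF t] show False by simp
qed

lemma psd_herm: "psd A \<Longrightarrow> A$j$i = cnj (A$i$j)"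
  using psd_iff hermitian_iff by blast

lemma psd_diag: assumes "psd A" shows "Im (A$k$k) = 0" "0 \<le> Re (A$k$k)"
  using assms qf_axis[of A k] unfolding psd_iff by metis+

lemma psd_zero_diag: assumes "psd A" "A$k$k = 0" shows "A$k$j = 0"
proof (cases "j = k")
  case True then show ?thesis using assms by simp
next
  case False
  define a where "a = A$k$j"
  have ha: "A$j$k = cnj a" using psd_herm[OF assms(1), of j k] a_def by simp
  have "0 \<le> Re (A$j$j) + t * (- 2 * (cmod a)^2)" if t: "t > 0" for t
  proof -
    define x where "x = - (complex_of_real t * a)"
    have h1: "0 \<le> Re (qf A (\<chi> l. if l = k then x else if l = j then 1 else 0))"
      using assms(1) unfolding psd_iff by blast
    have h2: "qf A (\<chi> l. if l = k then x else if l = j then 1 else 0) =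
       cnj x * A$k$k * x + cnj x * A$k$j * 1 + cnj 1 * A$j$k * x + cnj 1 * A$j$j * 1"
      by (rule qf_two[OF False])
    have h3: "cnj x * A$k$k * x + cnj x * A$k$j * 1 + cnj 1 * A$j$k * x + cnj 1 * A$j$j * 1
        = A$j$j - 2 * complex_of_real t * (cnj a * a)"
      using assms(2) unfolding x_def ha a_def[symmetric]
      by (simp add: algebra_simps)
    have h4: "cnj a * a = complex_of_real ((cmod a)^2)"
      by (metis complex_norm_square mult.commute of_real_power)
    have h5: "Re (A$j$j - 2 * complex_of_real t * complex_of_real ((cmod a)^2)) = Re (A$j$j) + t * (- 2 * (cmod a)^2)"
      by simp
    show ?thesis using h1 unfolding h2 h3 h4 h5 .
  qed
  then have "0 \<le> - 2 * (cmod a)^2" by (rule scale_nonneg)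
  then have "cmod a = 0" by simp
  then show ?thesis by (simp add: a_def)
qed

lemma psd_zero_diag': assumes "psd A" "A$k$k = 0" shows "A$j$k = 0"
  using psd_zero_diag[OF assms, of j] psd_herm[OF assms(1), of k j] by simp

definition outer :: "complex^'d \<Rightarrow> complex^'d \<Rightarrow> complex^'d^'d" where
  "outer v w = (\<chi> i j. v$i * cnj (w$j))"

lemma ip_outer: "ip A (outer v v) = Re (qf A v)"
  unfolding ip_expand qf_expand outer_def
  by (simp add: Re_sum algebra_simps)

lemma gcnj: "Im (g * cnj g) = 0 \<and> 0 \<le> Re (g * cnj g)"
  by simp

lemma psd_outer: "psd (outer v v)"
proof -
  define g where "g w = (\<Sum>i\<in>UNIV. cnj (w$i) * v$i)" for w
  have cg: "cnj (g w) = (\<Sum>i\<in>UNIV. w$i * cnj (v$i))" for w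
    unfolding g_def cnj_sum by simp
  have "qf (outer v v) w = g w * cnj (g w)" for w
    unfolding qf_expand outer_def cg g_def sum_product
    by (simp add: sum_product mult_ac)
  moreover have "hermitian (outer v v)" unfolding hermitian_iff outer_def by simp
  ultimately show ?thesis unfolding psd_iff
    using gcnj by simp
qed

lemma sum_if_out: "(\<Sum>j\<in>S. if P then g j else (0::complex)) = (if P then (\<Sum>j\<in>S. g j) else 0)"
  by (cases P) simp_all

lemma qf_shift: fixes A :: "'d::finite op"
  shows "qf A (\<chi> l. v$l + (if l = k then t else 0)) =
    qf A v + cnj t * (\<Sum>j\<in>UNIV. A$k$j * v$j) + (\<Sum>i\<in>UNIV. cnj (v$i) * A$i$k) * t + cnj t * A$k$k * t"
proof -
  have c: "\<And>i. cnj (v$i + (if i = k then t else 0)) = cnj (v$i) + (if i = k then cnj t else 0)"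
    by auto
  show ?thesis
    unfolding qf_expand vec_lambda_beta c
    by (simp add: ring_distribs sum.distrib if0_mult mult_if0 sum_if_out sum_distrib_left sum_distrib_right mult.assoc)
qed

lemma chol_step:
  fixes A :: "'d::finite op"
  assumes A: "psd A" and cdef: "c = Re (A$k$k)" and c: "c > 0"
  shows "psd (\<chi> i j. A$i$j - A$i$k * cnj (A$j$k) / complex_of_real c)"
proof -
  let ?A' = "\<chi> i j. A$i$j - A$i$k * cnj (A$j$k) / complex_of_real c :: complex^'d^'d"
  have Akk: "A$k$k = complex_of_real c" using psd_diag[OF A, of k] cdef
    by (simp add: complex_eq_iff)
  have herm: "hermitian ?A'"
    unfolding hermitian_iff
  proof (intro allI)
    fix i j
    have h1: "A$j$i = cnj (A$i$j)" by (rule psd_herm[OF A])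
    show "?A'$j$i = cnj (?A'$i$j)" by (simp add: h1 mult.commute)
  qed
  have "Im (qf ?A' v) = 0 \<and> 0 \<le> Re (qf ?A' v)" for v
  proof -
    define \<beta> where "\<beta> = (\<Sum>j\<in>UNIV. cnj (A$j$k) * v$j)"
    have b1: "(\<Sum>j\<in>UNIV. A$k$j * v$j) = \<beta>" unfolding \<beta>_def
      by (rule sum.cong[OF refl]) (simp add: psd_herm[OF A, of _ k])
    have b2: "(\<Sum>i\<in>UNIV. cnj (v$i) * A$i$k) = cnj \<beta>" unfolding \<beta>_def cnj_sum
      by (simp add: mult.commute)
    define t where "t = - \<beta> / complex_of_real c"
    define w where "w = (\<chi> l. v$l + (if l = k then t else 0))"
    have qw: "qf A w = qf A v - cnj \<beta> * \<beta> / complex_of_real c"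
      unfolding w_def qf_shift b1 b2 Akk t_def using c
      by (simp add: field_simps)
    have qa: "qf ?A' v = qf A v - cnj \<beta> * \<beta> / complex_of_real c"
    proof -
      have "qf ?A' v = (\<Sum>i\<in>UNIV. \<Sum>j\<in>UNIV. cnj (v$i) * A$i$j * v$j)
          - (\<Sum>i\<in>UNIV. \<Sum>j\<in>UNIV. (cnj (v$i) * A$i$k) * (cnj (A$j$k) * v$j)) / complex_of_real c"
        unfolding qf_expand
        by (simp add: ring_distribs sum_subtractf sum_divide_distrib mult_ac)
      also have "\<dots> = qf A v - cnj \<beta> * \<beta> / complex_of_real c"
        unfolding b2[symmetric] unfolding qf_expand \<beta>_def sum_product ..
      finally show ?thesis .
    qed
    show ?thesis using A unfolding psd_iff qa qw[symmetric] by blast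
  qed
  then show ?thesis using herm unfolding psd_iff by blast
qed

lemma sqrt_sq_c: assumes "0 \<le> c" shows "complex_of_real (sqrt c) * complex_of_real (sqrt c) = complex_of_real c"
proof -
  have "sqrt c * sqrt c = c" using assms by simp
  then have "complex_of_real (sqrt c * sqrt c) = complex_of_real c" by simp
  then show ?thesis by (simp only: of_real_mult)
qed

lemma psd_decomp_aux:
  "finite S \<Longrightarrow> \<forall>A::'d::finite op. psd A \<and> (\<forall>i j. i \<notin> S \<or> j \<notin> S \<longrightarrow> A$i$j = 0) \<longrightarrow>
     (\<exists>vs. A = sum_list (map (\<lambda>v. outer v v) vs))"
proof (induction S rule: finite_induct)
  case empty
  show ?case
  proof (intro allI impI)
    fix A :: "'d op" assume "psd A \<and> (\<forall>i j. i \<notin> {} \<or> j \<notin> {} \<longrightarrow> A$i$j = 0)"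
    then have "A = 0" by (simp add: vec_eq_iff)
    then show "\<exists>vs. A = sum_list (map (\<lambda>v. outer v v) vs)" by (intro exI[of _ "[]"]) simp
  qed
next
  case (insert k S)
  show ?case
  proof (intro allI impI)
    fix A :: "'d op" assume asm: "psd A \<and> (\<forall>i j. i \<notin> insert k S \<or> j \<notin> insert k S \<longrightarrow> A$i$j = 0)"
    then have A: "psd A" and supp: "\<And>i j. i \<notin> insert k S \<or> j \<notin> insert k S \<Longrightarrow> A$i$j = 0" by auto
    show "\<exists>vs. A = sum_list (map (\<lambda>v. outer v v) vs)"
    proof (cases "A$k$k = 0")
      case True
      have "\<forall>i j. i \<notin> S \<or> j \<notin> S \<longrightarrow> A$i$j = 0"
      proof (intro allI impI)
        fix i j assume ij: "i \<notin> S \<or> j \<notin> S"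
        show "A$i$j = 0"
        proof (cases "i = k")
          case True then show ?thesis using psd_zero_diag[OF A \<open>A$k$k = 0\<close>] by simp
        next
          case False
          show ?thesis
          proof (cases "j = k")
            case True then show ?thesis using psd_zero_diag'[OF A \<open>A$k$k = 0\<close>] by simp
          next
            case False
            have "i \<notin> insert k S \<or> j \<notin> insert k S" using ij \<open>i \<noteq> k\<close> False by blast
            then show ?thesis by (rule supp)
          qed
        qed
      qed
      then show ?thesis using insert.IH[rule_format, of A] A by blast
    next
      case False
      define c where "c = Re (A$k$k)"
      have Akk: "A$k$k = complex_of_real c" using psd_diag[OF A, of k] c_def
        by (simp add: complex_eq_iff)
      have "c \<noteq> 0" using False Akk by auto
      moreover have "c \<ge> 0" using psd_diag[OF A, of k] c_def by simp
      ultimately have c0: "c > 0" by simp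
      define A' where "A' = (\<chi> i j. A$i$j - A$i$k * cnj (A$j$k) / complex_of_real c :: complex^'d^'d)"
      have psdA': "psd A'" unfolding A'_def by (rule chol_step[OF A c_def c0])
      have hkj: "\<And>j. A$k$j = cnj (A$j$k)" by (rule psd_herm[OF A])
      have "\<forall>i j. i \<notin> S \<or> j \<notin> S \<longrightarrow> A'$i$j = 0"
      proof (intro allI impI)
        fix i j assume ij: "i \<notin> S \<or> j \<notin> S"
        show "A'$i$j = 0"
        proof (cases "i = k")
          case True
          have "A'$i$j = A$k$j - A$k$k * cnj (A$j$k) / complex_of_real c" unfolding A'_def True by simp
          also have "\<dots> = 0" using c0 unfolding Akk hkj[of j] by simp
          finally show ?thesis .
        next
          case False
          show ?thesis
          proof (cases "j = k")
            case True
            have "A'$i$j = A$i$k - A$i$k * cnj (A$k$k) / complex_of_real c" unfolding A'_def True by simp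
            also have "\<dots> = 0" using c0 unfolding Akk by simp
            finally show ?thesis .
          next
            case False
            have "i \<notin> insert k S \<or> j \<notin> insert k S" using ij \<open>i \<noteq> k\<close> False by blast
            then have z1: "A$i$j = 0" by (rule supp)
            have "i \<notin> insert k S \<or> k \<notin> insert k S" if "i \<notin> S" using that \<open>i \<noteq> k\<close> by blast
            moreover have "j \<notin> insert k S \<or> k \<notin> insert k S" if "j \<notin> S" using that False by blast
            ultimately have z2: "A$i$k = 0 \<or> A$j$k = 0" using ij supp by blast
            show ?thesis unfolding A'_def using z1 z2 by auto
          qed
        qed
      qed
      then obtain vs where vs: "A' = sum_list (map (\<lambda>v. outer v v) vs)"
        using insert.IH[rule_format, of A'] psdA' by blast
      define u where "u = (\<chi> i. A$i$k / complex_of_real (sqrt c))"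
      have "A = outer u u + A'"
      proof -
        have "A$i$j = (outer u u + A')$i$j" for i j
        proof -
          have "(outer u u)$i$j = A$i$k * cnj (A$j$k) / (complex_of_real (sqrt c) * complex_of_real (sqrt c))"
            by (simp add: outer_def u_def)
          also have "\<dots> = A$i$k * cnj (A$j$k) / complex_of_real c" using c0 by (simp add: sqrt_sq_c)
          finally show ?thesis by (simp add: A'_def)
        qed
        then show ?thesis by (simp add: vec_eq_iff)
      qed
      then show ?thesis using vs by (intro exI[of _ "u # vs"]) simp
    qed
  qed
qed

lemma psd_decomp: "psd (A::'d::finite op) \<Longrightarrow> \<exists>vs. A = sum_list (map (\<lambda>v. outer v v) vs)"
  using psd_decomp_aux[of "UNIV :: 'd set"] by auto

lemma ip_sum_list: "ip A (sum_list (map f vs)) = sum_list (map (\<lambda>v. ip A (f v)) vs)"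
  by (induction vs) (auto simp: ip_add_right)

lemma psd_ip_nonneg: assumes "psd A" "psd B" shows "0 \<le> ip A B"
proof -
  obtain vs where B: "B = sum_list (map (\<lambda>v. outer v v) vs)" using psd_decomp[OF assms(2)] by blast
  have "0 \<le> sum_list (map (\<lambda>v. ip A (outer v v)) vs)"
    by (rule sum_list_nonneg) (use assms(1) in \<open>auto simp: ip_outer psd_iff\<close>)
  then show ?thesis unfolding B ip_sum_list .
qed

lemma scC: "r *\<^sub>R (z::complex) = complex_of_real r * z" by (simp add: scaleR_conv_of_real)

lemma adj_add: "adj (A + B) = adj A + adj B" by (simp add: adj_def vec_eq_iff)
lemma adj_diff: "adj (A - B) = adj A - adj B" by (simp add: adj_def vec_eq_iff)
lemma adj_minus: "adj (- A) = - adj A" by (simp add: adj_def vec_eq_iff)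
lemma adj_scale: "adj (r *\<^sub>R A) = r *\<^sub>R adj A" by (simp add: adj_def vec_eq_iff scC)
lemma adj_zero: "adj 0 = 0" by (simp add: adj_def vec_eq_iff)
lemma adj_mat1: "adj (mat 1) = mat 1" by (simp add: adj_def vec_eq_iff mat_def)
lemma adj_sum: "adj (\<Sum>i\<in>S. A i) = (\<Sum>i\<in>S. adj (A i))"
  by (induction S rule: infinite_finite_induct) (auto simp: adj_add adj_zero)

lemma herm_add: "hermitian A \<Longrightarrow> hermitian B \<Longrightarrow> hermitian (A + B)"
  by (simp add: hermitian_def adj_add)
lemma herm_diff: "hermitian A \<Longrightarrow> hermitian B \<Longrightarrow> hermitian (A - B)"
  by (simp add: hermitian_def adj_diff)
lemma herm_scale: "hermitian A \<Longrightarrow> hermitian (r *\<^sub>R A)"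
  by (simp add: hermitian_def adj_scale)
lemma herm_sum: "(\<And>i. i \<in> S \<Longrightarrow> hermitian (A i)) \<Longrightarrow> hermitian (\<Sum>i\<in>S. A i)"
  by (simp add: hermitian_def adj_sum)
lemma psd_herm': "psd A \<Longrightarrow> hermitian A" by (simp add: psd_def)

lemma qf_add: "qf (A + B) v = qf A v + qf B v"
  by (simp add: qf_expand ring_distribs sum.distrib)
lemma qf_scale: "qf (r *\<^sub>R A) v = complex_of_real r * qf A v"
  by (simp add: qf_expand scC sum_distrib_left mult_ac)
lemma qf_zero: "qf 0 v = 0" by (simp add: qf_expand)

lemma psd_add: assumes "psd A" "psd B" shows "psd (A + B)"
  using assms unfolding psd_iff by (simp add: qf_add herm_add)
lemma psd_scale: assumes "psd A" "0 \<le> r" shows "psd (r *\<^sub>R A)"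
  using assms unfolding psd_iff by (simp add: qf_scale herm_scale)
lemma psd_zero: "psd (0::'d::finite op)"
  unfolding psd_iff by (simp add: qf_zero hermitian_def adj_zero)
lemma psd_sum: "(\<And>i. i \<in> S \<Longrightarrow> psd (A i)) \<Longrightarrow> psd (\<Sum>i\<in>S. A i)"
  by (induction S rule: infinite_finite_induct) (auto simp: psd_zero psd_add)
lemma psd_mat1: "psd (mat 1 :: 'd::finite op)"
proof -
  have "qf (mat 1) v = (\<Sum>i\<in>UNIV. cnj (v$i) * v$i)" for v :: "complex^'d"
    by (simp add: qf_def matrix_vector_mul_lid)
  then show ?thesis unfolding psd_iff
    by (simp add: hermitian_def adj_mat1 Im_sum Re_sum sum_nonneg)
qed

lemma tr_nonneg: "psd H \<Longrightarrow> 0 \<le> Re (tr H)"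
  unfolding tr_def Re_sum by (rule sum_nonneg) (simp add: psd_diag)

lemma psd_tr_zero: fixes Y :: "'d::finite op" assumes "psd Y" "Re (tr Y) \<le> 0" shows "Y = 0"
proof -
  have "Re (tr Y) = (\<Sum>i\<in>UNIV. Re (Y$i$i))" by (simp add: tr_def Re_sum)
  moreover have "\<forall>i\<in>UNIV. 0 \<le> Re (Y$i$i)" using psd_diag[OF assms(1)] by simp
  moreover have "0 \<le> (\<Sum>i\<in>UNIV. Re (Y$i$i))" using psd_diag[OF assms(1)] by (simp add: sum_nonneg)
  ultimately have s0: "(\<Sum>i\<in>UNIV. Re (Y$i$i)) = 0" using assms(2) by linarith
  have nn: "\<And>i. i \<in> UNIV \<Longrightarrow> 0 \<le> Re (Y$i$i)" using psd_diag[OF assms(1)] by simp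
  have "\<forall>i\<in>UNIV. Re (Y$i$i) = 0" using sum_nonneg_eq_0_iff[of "UNIV::'d set" "\<lambda>i. Re (Y$i$i)"] s0 nn by simp
  then have d: "Y$i$i = 0" for i using psd_diag(1)[OF assms(1), of i] by (simp add: complex_eq_iff)
  show ?thesis unfolding vec_eq_iff using psd_zero_diag[OF assms(1) d] by simp
qed

lemma herm_qf_real: assumes "hermitian A" shows "Im (qf A v) = 0"
proof -
  have h: "\<And>i j. cnj (A$i$j) = A$j$i" using assms hermitian_iff by (metis complex_cnj_cnj)
  have "cnj (qf A v) = (\<Sum>i\<in>UNIV. \<Sum>j\<in>UNIV. v$i * A$j$i * cnj (v$j))"
    unfolding qf_expand cnj_sum by (simp only: complex_cnj_mult complex_cnj_cnj h)
  also have "\<dots> = qf A v" unfolding qf_expand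
    by (subst sum.swap) (simp add: mult_ac)
  finally have "Im (cnj (qf A v)) = Im (qf A v)" by simp
  then show ?thesis by simp
qed

lemma tr_lin: "tr (X ** (a *\<^sub>R A + b *\<^sub>R B)) = complex_of_real a * tr (X ** A) + complex_of_real b * tr (X ** B)"
  by (simp add: tr_mult scC ring_distribs sum.distrib sum_distrib_left mult_ac)

lemma tr_scale: "tr (X ** (a *\<^sub>R A)) = complex_of_real a * tr (X ** A)"
  by (simp add: tr_mult scC ring_distribs sum.distrib sum_distrib_left mult_ac)

lemma inner_adj: "inner (adj A) B = inner A (adj B)"
proof -
  have "inner (adj A) B = (\<Sum>i\<in>UNIV. \<Sum>j\<in>UNIV. inner (cnj (A$j$i)) (B$i$j))"
    by (simp add: inner_vec_def adj_def)
  also have "\<dots> = (\<Sum>j\<in>UNIV. \<Sum>i\<in>UNIV. inner (A$j$i) (cnj (B$i$j)))"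
    by (subst sum.swap) (simp add: inner_complex_def)
  also have "\<dots> = inner A (adj B)" by (simp add: inner_vec_def adj_def)
  finally show ?thesis .
qed

lemma adj_adj: "adj (adj A) = A" by (simp add: adj_def vec_eq_iff)

lemma zero_Mset: "0 \<in> Mset n \<eta> \<rho> i"
  by (simp add: Mset_def psd_zero tr_mult)

lemma Mset_scale: assumes "A \<in> Mset n \<eta> \<rho> i" "0 \<le> a" shows "a *\<^sub>R A \<in> Mset n \<eta> \<rho> i"
  using assms by (simp add: Mset_def psd_scale tr_scale)

lemma Mset_comb: assumes "A \<in> Mset n \<eta> \<rho> i" "B \<in> Mset n \<eta> \<rho> i" "0 \<le> a" "0 \<le> b"
  shows "a *\<^sub>R A + b *\<^sub>R B \<in> Mset n \<eta> \<rho> i"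
  using assms by (simp add: Mset_def psd_scale psd_add tr_lin)

lemma psd_Mdual: "psd E \<Longrightarrow> E \<in> Mdual n \<eta> \<rho> i"
  by (auto simp: Mdual_def Mset_def psd_herm' ip_def[symmetric] intro: psd_ip_nonneg)

lemma weak_duality:
  assumes meas: "measurement n Mq M" and MM: "\<forall>i\<in>{1..n}. M i \<in> Mset n \<eta> \<rho> i"
    and H: "psd H" and HD: "\<forall>i\<in>{1..n}. H - \<eta> i *\<^sub>R \<rho> i \<in> Mdual n \<eta> \<rho> i"
  shows "(\<Sum>i=1..n. \<eta> i * Re (tr (\<rho> i ** M i))) \<le> Re (tr H)"
proof -
  have each: "\<eta> i * Re (tr (\<rho> i ** M i)) \<le> ip H (M i)" if i: "i \<in> {1..n}" for i
  proof -
    have "0 \<le> Re (tr ((H - \<eta> i *\<^sub>R \<rho> i) ** M i))"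
      using HD MM i unfolding Mdual_def by blast
    then show ?thesis by (simp add: ip_def[symmetric] ip_diff_left ip_scale_left)
  qed
  have "(\<Sum>i=1..n. \<eta> i * Re (tr (\<rho> i ** M i))) \<le> (\<Sum>i=1..n. ip H (M i))"
    by (rule sum_mono) (rule each)
  also have "\<dots> = ip H (\<Sum>i=1..n. M i)" by (simp add: ip_sum_right)
  also have "(\<Sum>i=1..n. M i) = mat 1 - Mq" using meas unfolding measurement_def
    by (simp add: algebra_simps)
  also have "ip H (mat 1 - Mq) = Re (tr H) - ip H Mq" by (simp add: ip_diff_right ip_mat1)
  also have "\<dots> \<le> Re (tr H)" using psd_ip_nonneg[OF H] meas unfolding measurement_def by simp
  finally show ?thesis .
qed

lemma strong_duality:
  fixes \<rho> :: "nat \<Rightarrow> 'd::finite op"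
  assumes rho: "\<And>i. i \<in> {1..n} \<Longrightarrow> psd (\<rho> i)"
    and pbound: "\<And>Mq M. measurement n Mq M \<Longrightarrow> (\<forall>i\<in>{1..n}. M i \<in> Mset n \<eta> \<rho> i) \<Longrightarrow>
        (\<Sum>i=1..n. \<eta> i * Re (tr (\<rho> i ** M i))) \<le> p"
    and e: "e > 0"
  shows "\<exists>H. psd H \<and> (\<forall>i\<in>{1..n}. H - \<eta> i *\<^sub>R \<rho> i \<in> Mdual n \<eta> \<rho> i) \<and> Re (tr H) \<le> p + e"
proof -
  define val where "val M = (\<Sum>i=1..n. \<eta> i * Re (tr (\<rho> i ** M i)))" for M :: "nat \<Rightarrow> 'd op"
  define S0 :: "('d op \<times> real) set" where "S0 = {((\<Sum>i=1..n. M i) + Q + Z, val M - s) | M Q Z s.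
      (\<forall>i\<in>{1..n}. M i \<in> Mset n \<eta> \<rho> i) \<and> psd Q \<and> adj Z = - Z \<and> s \<ge> 0}"
  define z :: "'d op \<times> real" where "z = (mat 1, p + e)"
  have val_comb: "val (\<lambda>i. u *\<^sub>R M i + v *\<^sub>R M' i) = u * val M + v * val M'" for u v :: real and M M'
    unfolding val_def by (simp add: tr_lin sum.distrib sum_distrib_left algebra_simps)
  have "convex S0"
  proof (rule convexI)
    fix x y and u v :: real assume x: "x \<in> S0" and y: "y \<in> S0" and u: "0 \<le> u" and v: "0 \<le> v" and uv: "u + v = 1"
    obtain M Q Z s where xe: "x = ((\<Sum>i=1..n. M i) + Q + Z, val M - s)" and
      c1: "\<forall>i\<in>{1..n}. M i \<in> Mset n \<eta> \<rho> i" "psd Q" "adj Z = - Z" "s \<ge> 0"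
      using x unfolding S0_def by blast
    obtain M' Q' Z' s' where ye: "y = ((\<Sum>i=1..n. M' i) + Q' + Z', val M' - s')" and
      c2: "\<forall>i\<in>{1..n}. M' i \<in> Mset n \<eta> \<rho> i" "psd Q'" "adj Z' = - Z'" "s' \<ge> 0"
      using y unfolding S0_def by blast
    have "u *\<^sub>R x + v *\<^sub>R y = ((\<Sum>i=1..n. u *\<^sub>R M i + v *\<^sub>R M' i) + (u *\<^sub>R Q + v *\<^sub>R Q') + (u *\<^sub>R Z + v *\<^sub>R Z'),
        val (\<lambda>i. u *\<^sub>R M i + v *\<^sub>R M' i) - (u * s + v * s'))"
      unfolding xe ye val_comb by (simp add: scaleR_add_right scaleR_sum_right sum.distrib algebra_simps)
    moreover have "\<forall>i\<in>{1..n}. u *\<^sub>R M i + v *\<^sub>R M' i \<in> Mset n \<eta> \<rho> i"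
      using c1(1) c2(1) u v by (simp add: Mset_comb)
    moreover have "psd (u *\<^sub>R Q + v *\<^sub>R Q')" using c1(2) c2(2) u v by (simp add: psd_add psd_scale)
    moreover have "adj (u *\<^sub>R Z + v *\<^sub>R Z') = - (u *\<^sub>R Z + v *\<^sub>R Z')"
      using c1(3) c2(3) by (simp add: adj_add adj_scale)
    moreover have "u * s + v * s' \<ge> 0" using c1(4) c2(4) u v by simp
    ultimately show "u *\<^sub>R x + v *\<^sub>R y \<in> S0" unfolding S0_def by blast
  qed
  define S where "S = (\<lambda>x. x - z) ` S0"
  have cS: "convex S" unfolding S_def using \<open>convex S0\<close> by (rule convex_translation_subtract)
  have "0 \<notin> S"
  proof
    assume "0 \<in> S"
    then have "z \<in> S0" unfolding S_def by auto
    then obtain M Q Z s where ze: "z = ((\<Sum>i=1..n. M i) + Q + Z, val M - s)" and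
      c1: "\<forall>i\<in>{1..n}. M i \<in> Mset n \<eta> \<rho> i" "psd Q" "adj Z = - Z" "s \<ge> 0"
      unfolding S0_def by blast
    have e1: "(\<Sum>i=1..n. M i) + Q + Z = mat 1" and e2: "val M - s = p + e" using ze unfolding z_def by auto
    have Zd: "Z = mat 1 - (\<Sum>i=1..n. M i) - Q" using e1 by (simp add: algebra_simps)
    have "adj Z = Z" unfolding Zd adj_diff adj_mat1 adj_sum
      using c1(1,2) by (simp add: Mset_def psd_def hermitian_def)
    then have "Z = - Z" using c1(3) by simp
    then have "Z = 0" by (simp add: vec_eq_iff complex_eq_iff)
    then have "measurement n Q M" using e1 c1 unfolding measurement_def Mset_def by (simp add: algebra_simps)
    then have "val M \<le> p" using pbound c1(1) unfolding val_def by blast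
    then show False using e2 c1(4) e by simp
  qed
  obtain a where a0: "a \<noteq> 0" and ha: "\<forall>x\<in>S. 0 \<le> inner a x"
    using separating_hyperplane_set_0[OF cS \<open>0 \<notin> S\<close>] by blast
  obtain Y \<tau> where aY: "a = (Y, \<tau>)" by (cases a)
  define B where "B = - inner Y (mat 1) - \<tau> * (p + e)"
  have key: "0 \<le> inner Y (\<Sum>i=1..n. M i) + inner Y Q + inner Y Z + \<tau> * val M - \<tau> * s + B"
    if "\<forall>i\<in>{1..n}. M i \<in> Mset n \<eta> \<rho> i" "psd Q" "adj Z = - Z" "s \<ge> 0" for M Q Z s
  proof -
    have "((\<Sum>i=1..n. M i) + Q + Z, val M - s) \<in> S0" unfolding S0_def using that by blast
    then have "((\<Sum>i=1..n. M i) + Q + Z, val M - s) - z \<in> S" unfolding S_def by blast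
    then have "0 \<le> inner a (((\<Sum>i=1..n. M i) + Q + Z, val M - s) - z)" using ha by blast
    then show ?thesis unfolding aY z_def B_def by (simp add: inner_add_right inner_diff_right algebra_simps)
  qed
  have val0: "val (\<lambda>_. 0) = 0" unfolding val_def by (simp add: tr_def)
  have zM: "\<forall>i\<in>{1..n}. (\<lambda>_. 0) i \<in> Mset n \<eta> \<rho> i" by (simp add: zero_Mset)
  have B0: "0 \<le> B" using key[OF zM psd_zero, of 0 0] by (simp add: adj_zero val0)
  have antiY: "inner Y W = 0" if W: "adj W = - W" for W
  proof -
    have "0 \<le> inner Y W'" if W': "adj W' = - W'" for W'
    proof (rule scale_nonneg[of B])
      fix t :: real assume t: "t > 0"
      have "adj (t *\<^sub>R W') = - (t *\<^sub>R W')" using W' by (simp add: adj_scale)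
      from key[OF zM psd_zero this, of 0] show "0 \<le> B + t * inner Y W'" by (simp add: val0)
    qed
    from this[OF W] this[of "- W"] W show ?thesis by (simp add: adj_minus)
  qed
  have hY: "hermitian Y"
  proof -
    define W where "W = Y - adj Y"
    have aW: "adj W = - W" unfolding W_def by (simp add: adj_diff adj_adj)
    have "inner Y W = 0" by (rule antiY[OF aW])
    moreover have "inner (adj Y) W = 0" unfolding inner_adj aW using antiY[OF aW] by simp
    ultimately have "inner W W = 0" unfolding W_def by (simp add: inner_diff_left)
    then have "W = 0" by simp
    then show ?thesis unfolding hermitian_def W_def by simp
  qed
  have psdpos: "0 \<le> inner Y Q0" if Q0: "psd Q0" for Q0
  proof (rule scale_nonneg[of B])
    fix t :: real assume t: "t > 0"
    have "psd (t *\<^sub>R Q0)" using Q0 t by (simp add: psd_scale)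
    from key[OF zM this, of 0 0] show "0 \<le> B + t * inner Y Q0" by (simp add: adj_zero val0)
  qed
  have pY: "psd Y"
    unfolding psd_iff
  proof (intro conjI allI hY)
    fix v
    show "Im (qf Y v) = 0" by (rule herm_qf_real[OF hY])
    show "0 \<le> Re (qf Y v)" using psdpos[OF psd_outer[of v]] by (simp add: inner_herm[OF hY] ip_outer)
  qed
  have tau: "0 \<le> - \<tau>"
  proof (rule scale_nonneg[of B])
    fix t :: real assume t: "t > 0"
    from key[OF zM psd_zero, of 0 t] t show "0 \<le> B + t * (- \<tau>)" by (simp add: adj_zero val0 mult.commute)
  qed
  have Fpos: "0 \<le> inner Y F + \<tau> * (\<eta> i * ip (\<rho> i) F)" if i: "i \<in> {1..n}" and F: "F \<in> Mset n \<eta> \<rho> i" for i F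
  proof (rule scale_nonneg[of B])
    fix t :: real assume t: "t > 0"
    define M where "M = (\<lambda>j. if j = i then t *\<^sub>R F else (0::'d op))"
    have MM: "\<forall>j\<in>{1..n}. M j \<in> Mset n \<eta> \<rho> j" unfolding M_def using F t
      by (auto simp: zero_Mset Mset_scale)
    have sM: "(\<Sum>j=1..n. M j) = t *\<^sub>R F" unfolding M_def using i by simp
    have vM: "val M = t * (\<eta> i * ip (\<rho> i) F)"
    proof -
      have "val M = (\<Sum>j=1..n. if j = i then \<eta> i * Re (tr (\<rho> i ** (t *\<^sub>R F))) else 0)"
        unfolding val_def M_def by (rule sum.cong) (auto simp: tr_def)
      also have "\<dots> = \<eta> i * Re (tr (\<rho> i ** (t *\<^sub>R F)))" using i by simp
      also have "\<dots> = t * (\<eta> i * ip (\<rho> i) F)" by (simp add: ip_def[symmetric] ip_scale_right)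
      finally show ?thesis .
    qed
    from key[OF MM psd_zero, of 0 0, unfolded sM vM]
    show "0 \<le> B + t * (inner Y F + \<tau> * (\<eta> i * ip (\<rho> i) F))"
      by (simp add: adj_zero sM vM algebra_simps)
  qed
  have "\<tau> \<noteq> 0"
  proof
    assume t0: "\<tau> = 0"
    then have "Re (tr Y) \<le> 0" using B0 unfolding B_def by (simp add: inner_herm[OF hY] ip_mat1)
    then have "Y = 0" by (rule psd_tr_zero[OF pY])
    then show False using a0 aY t0 by (simp add: zero_prod_def)
  qed
  then have tneg: "\<tau> < 0" using tau by simp
  define k where "k = - \<tau>"
  have k: "k > 0" using tneg k_def by simp
  define H where "H = (1 / k) *\<^sub>R Y"
  have pH: "psd H" unfolding H_def using pY k by (simp add: psd_scale)
  have trH: "Re (tr H) = Re (tr Y) / k" unfolding H_def by (simp add: tr_def Re_sum scC sum_divide_distrib)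
  have "Re (tr Y) \<le> k * (p + e)" using B0 unfolding B_def k_def by (simp add: inner_herm[OF hY] ip_mat1)
  then have trle: "Re (tr H) \<le> p + e" unfolding trH using k by (simp add: divide_le_eq mult.commute)
  have "H - \<eta> i *\<^sub>R \<rho> i \<in> Mdual n \<eta> \<rho> i" if i: "i \<in> {1..n}" for i
    unfolding Mdual_def
  proof (intro CollectI conjI ballI)
    show "hermitian (H - \<eta> i *\<^sub>R \<rho> i)" unfolding H_def
      using hY psd_herm'[OF rho[OF i]] by (intro herm_diff herm_scale)
    fix F assume F: "F \<in> Mset n \<eta> \<rho> i"
    have tk: "\<tau> = - k" by (simp add: k_def)
    have "Re (tr ((H - \<eta> i *\<^sub>R \<rho> i) ** F)) = (1 / k) * ip Y F - \<eta> i * ip (\<rho> i) F"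
      unfolding ip_def[symmetric] H_def by (simp add: ip_diff_left ip_scale_left)
    also have "\<dots> = (1 / k) * (inner Y F + \<tau> * (\<eta> i * ip (\<rho> i) F))"
      unfolding inner_herm[OF hY] tk using k by (simp add: field_simps)
    also have "\<dots> \<ge> 0" using Fpos[OF i F] k by simp
    finally show "0 \<le> Re (tr ((H - \<eta> i *\<^sub>R \<rho> i) ** F))" .
  qed
  then show ?thesis using pH trle by blast
qed

theorem theorem2:
  fixes n :: nat and \<eta> :: "nat \<Rightarrow> real" and \<rho> :: "nat \<Rightarrow> complex^'d::finite^'d"
  assumes "ensemble n \<eta> \<rho>"
  shows "pG n \<eta> \<rho> = qG n \<eta> \<rho>"
proof -
  have eta: "\<And>i. i \<in> {1..n} \<Longrightarrow> \<eta> i > 0" and rho: "\<And>i. i \<in> {1..n} \<Longrightarrow> psd (\<rho> i)"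
    using assms unfolding ensemble_def density_def by auto
  define P where "P = {(\<Sum>i=1..n. \<eta> i * Re (tr (\<rho> i ** M i))) | Mq M.
      measurement n Mq M \<and> (\<forall>i\<in>{1..n}. M i \<in> Mset n \<eta> \<rho> i)}"
  define D where "D = {Re (tr H) | H. psd H \<and> (\<forall>i\<in>{1..n}. H - \<eta> i *\<^sub>R \<rho> i \<in> Mdual n \<eta> \<rho> i)}"
  have pG: "pG n \<eta> \<rho> = Sup P" unfolding pG_def P_def ..
  have qG: "qG n \<eta> \<rho> = Inf D" unfolding qG_def D_def ..
  define H0 where "H0 = (\<Sum>i=1..n. \<eta> i *\<^sub>R \<rho> i)"
  have pH0: "psd H0" unfolding H0_def using eta rho
    by (intro psd_sum psd_scale) (auto simp: less_imp_le)
  have H0D: "\<forall>i\<in>{1..n}. H0 - \<eta> i *\<^sub>R \<rho> i \<in> Mdual n \<eta> \<rho> i"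
  proof
    fix i assume i: "i \<in> {1..n}"
    have "H0 - \<eta> i *\<^sub>R \<rho> i = (\<Sum>j\<in>{1..n} - {i}. \<eta> j *\<^sub>R \<rho> j)"
      unfolding H0_def using i by (simp add: sum.remove)
    moreover have "psd (\<Sum>j\<in>{1..n} - {i}. \<eta> j *\<^sub>R \<rho> j)" using eta rho
      by (intro psd_sum psd_scale) (auto simp: less_imp_le)
    ultimately show "H0 - \<eta> i *\<^sub>R \<rho> i \<in> Mdual n \<eta> \<rho> i" by (simp add: psd_Mdual)
  qed
  have Dne: "D \<noteq> {}" unfolding D_def using pH0 H0D by blast
  have bddD: "bdd_below D" unfolding D_def bdd_below_def using tr_nonneg by blast
  have "measurement n (mat 1) (\<lambda>_. 0)" unfolding measurement_def by (simp add: psd_mat1 psd_zero)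
  then have Pne: "P \<noteq> {}" unfolding P_def using zero_Mset by blast
  have weak: "x \<le> y" if "x \<in> P" "y \<in> D" for x y
    using that unfolding P_def D_def using weak_duality by blast
  have bddP: "bdd_above P" unfolding bdd_above_def using weak Dne by blast
  have le1: "Sup P \<le> Inf D"
    by (rule cSup_least[OF Pne], rule cInf_greatest[OF Dne]) (rule weak)
  have le2: "Inf D \<le> Sup P"
  proof (rule field_le_epsilon)
    fix e :: real assume e: "e > 0"
    have pb: "(\<Sum>i=1..n. \<eta> i * Re (tr (\<rho> i ** M i))) \<le> Sup P"
      if "measurement n Mq M" "\<forall>i\<in>{1..n}. M i \<in> Mset n \<eta> \<rho> i" for Mq M
      by (rule cSup_upper[OF _ bddP]) (use that in \<open>auto simp: P_def\<close>)
    obtain H where H: "psd H" "\<forall>i\<in>{1..n}. H - \<eta> i *\<^sub>R \<rho> i \<in> Mdual n \<eta> \<rho> i" "Re (tr H) \<le> Sup P + e"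
    proof -
      have "\<exists>H. psd H \<and> (\<forall>i\<in>{1..n}. H - \<eta> i *\<^sub>R \<rho> i \<in> Mdual n \<eta> \<rho> i) \<and> Re (tr H) \<le> Sup P + e"
      proof (rule strong_duality[where \<rho>=\<rho> and n=n and \<eta>=\<eta> and p="Sup P" and e=e])
        show "\<And>i. i \<in> {1..n} \<Longrightarrow> psd (\<rho> i)" by (rule rho)
        show "\<And>Mq M. measurement n Mq M \<Longrightarrow> (\<forall>i\<in>{1..n}. M i \<in> Mset n \<eta> \<rho> i) \<Longrightarrow>
          (\<Sum>i=1..n. \<eta> i * Re (tr (\<rho> i ** M i))) \<le> Sup P" by (rule pb)
        show "e > 0" by (rule e)
      qed
      then show ?thesis using that by blast
    qed
    have "Re (tr H) \<in> D" unfolding D_def using H by blast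
    then have "Inf D \<le> Re (tr H)" by (rule cInf_lower[OF _ bddD])
    then show "Inf D \<le> Sup P + e" using H(3) by simp
  qed
  show ?thesis unfolding pG qG using le1 le2 by simp
qed


end
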